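(* Assume $K$ is a field and $\tau_{(i)}\neq0$, $\eta_{(i)}\neq0$ for all $i\in\Omega$. Then $\mathbf{P}$ is hierarchical if and only if for all $B,D\in\mathcal{I}(\overline{\mathbf{P}})$, $|B|=|D|$ implies $\deg(\pi(\Omega,B))=\deg(\pi(\Omega,D))$.
   Context: $\Omega$ is a finite set and $\mathbf{P}=(\Omega,\preccurlyeq_{\mathbf{P}})$ a poset; $\overline{\mathbf{P}}$ is the dual poset and $\mathcal{I}(\overline{\mathbf{P}})$ its set of ideals (up-closed subsets of $\mathbf{P}$). For $Y\subseteq\Omega$: $\max(Y)$ is the set of maximal elements of $Y$ w.r.t. $\preccurlyeq_{\mathbf{P}}$; $\mathcal{I}(Y)$ is the set of down-closed subsets of $Y$. $\tau,\eta\in K^{\Omega}$. For $D,I\subseteq\Omega$, $\varphi(D,I)=(-1)^{|I\cap D|}\big(\prod_{i\in I-\max(I)}\tau_{(i)}\big)\big(\prod_{i\in\max(I)-D}\eta_{(i)}\big)$ if $I\cap D\subseteq\max(I)$, and $0$ otherwise; for $D\subseteq Y\subseteq\Omega$, $\pi(Y,D)=\sum_{I\in\mathcal{I}(Y)}\varphi(D,I)x^{|I|}\in K[x]$. $\mathrm{len}(y)$ is the largest cardinality of a chain in $\mathbf{P}$ with greatest element $y$; $\mathbf{P}$ is hierarchical if $\mathrm{len}(u)+1\leqslant\mathrm{len}(v)$ implies $u\preccurlyeq_{\mathbf{P}}v$. *)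

theory Defs
  imports "HOL-Computational_Algebra.Polynomial"
begin

definition is_poset :: "'a set \<Rightarrow> ('a \<Rightarrow> 'a \<Rightarrow> bool) \<Rightarrow> bool" where
  "is_poset Omega le \<longleftrightarrow>
     (\<forall>x\<in>Omega. le x x) \<and>
     (\<forall>x\<in>Omega. \<forall>y\<in>Omega. le x y \<and> le y x \<longrightarrow> x = y) \<and>
     (\<forall>x\<in>Omega. \<forall>y\<in>Omega. \<forall>z\<in>Omega. le x y \<and> le y z \<longrightarrow> le x z)"

definition maxs :: "('a \<Rightarrow> 'a \<Rightarrow> bool) \<Rightarrow> 'a set \<Rightarrow> 'a set" where
  "maxs le Y = {y \<in> Y. \<forall>z\<in>Y. le y z \<longrightarrow> z = y}"

definition down_closed_subsets :: "('a \<Rightarrow> 'a \<Rightarrow> bool) \<Rightarrow> 'a set \<Rightarrow> 'a set set" where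
  "down_closed_subsets le Y = {I. I \<subseteq> Y \<and> (\<forall>i\<in>I. \<forall>j\<in>Y. le j i \<longrightarrow> j \<in> I)}"

text \<open>Ideals of the dual poset: up-closed subsets of Omega.\<close>
definition dual_ideals :: "'a set \<Rightarrow> ('a \<Rightarrow> 'a \<Rightarrow> bool) \<Rightarrow> 'a set set" where
  "dual_ideals Omega le = {B. B \<subseteq> Omega \<and> (\<forall>i\<in>B. \<forall>j\<in>Omega. le i j \<longrightarrow> j \<in> B)}"

definition phi :: "('a \<Rightarrow> 'a \<Rightarrow> bool) \<Rightarrow> ('a \<Rightarrow> 'k::field) \<Rightarrow> ('a \<Rightarrow> 'k) \<Rightarrow> 'a set \<Rightarrow> 'a set \<Rightarrow> 'k" where
  "phi le tau eta D I =
     (if I \<inter> D \<subseteq> maxs le I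
      then (-1) ^ card (I \<inter> D) * (\<Prod>i \<in> I - maxs le I. tau i) * (\<Prod>i \<in> maxs le I - D. eta i)
      else 0)"

definition pi_poly :: "('a \<Rightarrow> 'a \<Rightarrow> bool) \<Rightarrow> ('a \<Rightarrow> 'k::field) \<Rightarrow> ('a \<Rightarrow> 'k) \<Rightarrow> 'a set \<Rightarrow> 'a set \<Rightarrow> 'k poly" where
  "pi_poly le tau eta Y D = (\<Sum>I \<in> down_closed_subsets le Y. monom (phi le tau eta D I) (card I))"

definition is_chain :: "('a \<Rightarrow> 'a \<Rightarrow> bool) \<Rightarrow> 'a set \<Rightarrow> bool" where
  "is_chain le C \<longleftrightarrow> (\<forall>a\<in>C. \<forall>b\<in>C. le a b \<or> le b a)"

definition len :: "'a set \<Rightarrow> ('a \<Rightarrow> 'a \<Rightarrow> bool) \<Rightarrow> 'a \<Rightarrow> nat" where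
  "len Omega le y = Max (card ` {C. C \<subseteq> Omega \<and> is_chain le C \<and> y \<in> C \<and> (\<forall>c\<in>C. le c y)})"

definition hierarchical :: "'a set \<Rightarrow> ('a \<Rightarrow> 'a \<Rightarrow> bool) \<Rightarrow> bool" where
  "hierarchical Omega le \<longleftrightarrow>
     (\<forall>u\<in>Omega. \<forall>v\<in>Omega. len Omega le u + 1 \<le> len Omega le v \<longrightarrow> le u v)"

end

theory Submission
  imports Defs
begin

definition mins :: "('a \<Rightarrow> 'a \<Rightarrow> bool) \<Rightarrow> 'a set \<Rightarrow> 'a set" where
  "mins le D = {y \<in> D. \<forall>z\<in>D. le z y \<longrightarrow> z = y}"

lemma degree_pi:
  fixes tau eta :: "'a \<Rightarrow> 'k::field"
  assumes fin: "finite Omega" and po: "is_poset Omega le"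
    and tz: "\<forall>i\<in>Omega. tau i \<noteq> 0" and ez: "\<forall>i\<in>Omega. eta i \<noteq> 0"
    and D: "D \<in> dual_ideals Omega le"
  shows "degree (pi_poly le tau eta Omega D) = card (Omega - D) + card (mins le D)"
proof -
  have DO: "D \<subseteq> Omega" and up: "\<forall>i\<in>D. \<forall>j\<in>Omega. le i j \<longrightarrow> j \<in> D"
    using D by (auto simp: dual_ideals_def)
  define I0 where "I0 = (Omega - D) \<union> mins le D"
  have mD: "mins le D \<subseteq> D" by (auto simp: mins_def)
  have I0O: "I0 \<subseteq> Omega" using DO mD by (auto simp: I0_def)
  have finI0: "finite I0" using I0O fin finite_subset by blast
  have cardI0: "card I0 = card (Omega - D) + card (mins le D)"
    unfolding I0_def using fin DO mD
    by (subst card_Un_disjoint) (auto intro: finite_subset)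
  have I0dc: "I0 \<in> down_closed_subsets le Omega"
    unfolding down_closed_subsets_def
  proof (intro CollectI conjI I0O ballI impI)
    fix i j assume i: "i \<in> I0" and j: "j \<in> Omega" and ji: "le j i"
    show "j \<in> I0"
    proof (cases "j \<in> D")
      case True
      then have "i \<in> D" using up ji i I0O by blast
      then have "i \<in> mins le D" using i by (auto simp: I0_def)
      then have "j = i" using True ji by (auto simp: mins_def)
      then show ?thesis using i by simp
    qed (use j in \<open>auto simp: I0_def\<close>)
  qed
  have cond0: "I0 \<inter> D \<subseteq> maxs le I0"
  proof
    fix m assume m: "m \<in> I0 \<inter> D"
    then have mm: "m \<in> mins le D" by (auto simp: I0_def)
    show "m \<in> maxs le I0" unfolding maxs_def
    proof (intro CollectI conjI ballI impI)
      show "m \<in> I0" using m by simp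
      fix z assume z: "z \<in> I0" and mz: "le m z"
      have "z \<in> D" using up mm mD mz z I0O by blast
      then have "z \<in> mins le D" using z by (auto simp: I0_def)
      then show "z = m" using mm mD mz by (auto simp: mins_def)
    qed
  qed
  have ne0: "phi le tau eta D I0 \<noteq> 0"
  proof -
    have "finite (I0 - maxs le I0)" "finite (maxs le I0 - D)" using finI0 by (auto intro: finite_subset[of _ I0] simp: maxs_def)
    moreover have "(\<Prod>i \<in> I0 - maxs le I0. tau i) \<noteq> 0"
      using tz I0O finI0 by (subst prod_zero_iff) auto
    moreover have "(\<Prod>i \<in> maxs le I0 - D. eta i) \<noteq> 0"
      using ez I0O finI0 by (subst prod_zero_iff) (auto simp: maxs_def)
    ultimately show ?thesis using cond0 by (simp add: phi_def)
  qed
  have sub: "I \<subseteq> I0" if I: "I \<in> down_closed_subsets le Omega" and ph: "phi le tau eta D I \<noteq> 0" for I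
  proof
    have c: "I \<inter> D \<subseteq> maxs le I" using ph by (auto simp: phi_def split: if_splits)
    have IO: "I \<subseteq> Omega" and dc: "\<forall>i\<in>I. \<forall>j\<in>Omega. le j i \<longrightarrow> j \<in> I"
      using I by (auto simp: down_closed_subsets_def)
    fix i assume i: "i \<in> I"
    show "i \<in> I0"
    proof (cases "i \<in> D")
      case False then show ?thesis using i IO by (auto simp: I0_def)
    next
      case True
      have "i \<in> mins le D" unfolding mins_def
      proof (intro CollectI conjI True ballI impI)
        fix z assume z: "z \<in> D" and zi: "le z i"
        have "z \<in> I" using dc i z DO zi by blast
        then have "z \<in> maxs le I" using c z by blast
        then show "z = i" using zi i by (auto simp: maxs_def)
      qed
      then show ?thesis by (simp add: I0_def)
    qed
  qed
  have finDC: "finite (down_closed_subsets le Omega)"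
    by (rule finite_subset[of _ "Pow Omega"]) (auto simp: down_closed_subsets_def fin)
  have coeffs: "coeff (pi_poly le tau eta Omega D) n =
      (\<Sum>I\<in>down_closed_subsets le Omega. if card I = n then phi le tau eta D I else 0)" for n
    by (simp add: pi_poly_def coeff_sum eq_commute)
  have "coeff (pi_poly le tau eta Omega D) n = 0" if "n > card I0" for n
    unfolding coeffs
  proof (rule sum.neutral, rule ballI)
    fix I assume I: "I \<in> down_closed_subsets le Omega"
    show "(if card I = n then phi le tau eta D I else 0) = 0"
    proof (rule ccontr)
      assume "\<not> ?thesis"
      then have "card I = n" "phi le tau eta D I \<noteq> 0" by (auto split: if_splits)
      moreover have "card I \<le> card I0" using card_mono[OF finI0 sub[OF I]] \<open>phi le tau eta D I \<noteq> 0\<close> by blast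
      ultimately show False using that by linarith
    qed
  qed
  then have le1: "degree (pi_poly le tau eta Omega D) \<le> card I0" by (intro degree_le) auto
  have "coeff (pi_poly le tau eta Omega D) (card I0) = phi le tau eta D I0"
    unfolding coeffs
  proof (subst sum.remove[OF finDC I0dc], subst sum.neutral)
    show "\<forall>I\<in>down_closed_subsets le Omega - {I0}. (if card I = card I0 then phi le tau eta D I else 0) = 0"
    proof
      fix I assume I: "I \<in> down_closed_subsets le Omega - {I0}"
      show "(if card I = card I0 then phi le tau eta D I else 0) = 0"
      proof (rule ccontr)
        assume "\<not> ?thesis"
        then have "card I = card I0" "phi le tau eta D I \<noteq> 0" by (auto split: if_splits)
        moreover have "I \<subseteq> I0" using sub[of I] I \<open>phi le tau eta D I \<noteq> 0\<close> by blast
        ultimately have "I = I0" using card_subset_eq[OF finI0] by blast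
        then show False using I by blast
      qed
    qed
  qed simp
  then have "card I0 \<le> degree (pi_poly le tau eta Omega D)" using ne0 by (intro le_degree) simp
  with le1 cardI0 show ?thesis by simp
qed


lemma poset_sub: "is_poset Omega le \<Longrightarrow> A \<subseteq> Omega \<Longrightarrow> is_poset A le"
  unfolding is_poset_def by blast

lemma ex_maximal_P:
  assumes fin: "finite Omega" and po: "is_poset Omega le" and x: "x \<in> Omega" "P x"
  shows "\<exists>y\<in>Omega. P y \<and> (\<forall>z\<in>Omega. le y z \<and> P z \<longrightarrow> z = y)"
proof -
  let ?m = "\<lambda>y. card {z\<in>Omega. le y z}"
  obtain y where y: "y \<in> Omega \<and> P y" and least: "\<forall>w. w \<in> Omega \<and> P w \<longrightarrow> ?m y \<le> ?m w"
    using ex_has_least_nat[of "\<lambda>y. y \<in> Omega \<and> P y" x ?m] x by blast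
  have "z = y" if z: "z \<in> Omega" "le y z" "P z" for z
  proof (rule ccontr)
    assume ne: "z \<noteq> y"
    have "{w\<in>Omega. le z w} \<subset> {w\<in>Omega. le y w}"
    proof
      show "{w\<in>Omega. le z w} \<subseteq> {w\<in>Omega. le y w}"
        using po z y unfolding is_poset_def by blast
      have "y \<notin> {w\<in>Omega. le z w}" using po z y ne unfolding is_poset_def by blast
      moreover have "y \<in> {w\<in>Omega. le y w}" using po y unfolding is_poset_def by blast
      ultimately show "{w\<in>Omega. le z w} \<noteq> {w\<in>Omega. le y w}" by blast
    qed
    then have "?m z < ?m y" by (rule psubset_card_mono[rotated]) (simp add: fin)
    with least z show False by fastforce
  qed
  then show ?thesis using y by blast
qed

definition chs where
  "chs Omega le y = {C. C \<subseteq> Omega \<and> is_chain le C \<and> y \<in> C \<and> (\<forall>c\<in>C. le c y)}"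

lemma chs_fin: "finite Omega \<Longrightarrow> finite (chs Omega le y)"
  by (rule finite_subset[of _ "Pow Omega"]) (auto simp: chs_def)

lemma chs_ne: "is_poset Omega le \<Longrightarrow> y \<in> Omega \<Longrightarrow> {y} \<in> chs Omega le y"
  by (auto simp: chs_def is_chain_def is_poset_def)

lemma len_alt: "len Omega le y = Max (card ` chs Omega le y)"
  by (simp add: len_def chs_def)

lemma len_ge: "finite Omega \<Longrightarrow> C \<in> chs Omega le y \<Longrightarrow> card C \<le> len Omega le y"
  unfolding len_alt by (rule Max_ge) (auto simp: chs_fin)

lemma len_obtain:
  assumes "finite Omega" "is_poset Omega le" "y \<in> Omega"
  obtains C where "C \<in> chs Omega le y" "card C = len Omega le y"
proof -
  have "len Omega le y \<in> card ` chs Omega le y"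
    unfolding len_alt using chs_fin[OF assms(1)] chs_ne[OF assms(2,3)] by (intro Max_in) auto
  then show ?thesis using that by (metis imageE)
qed

lemma len_mono:
  assumes fin: "finite Omega" and po: "is_poset Omega le" and xy: "x \<in> Omega" "y \<in> Omega" "le x y" "x \<noteq> y"
  shows "len Omega le x < len Omega le y"
proof -
  obtain C where C: "C \<in> chs Omega le x" "card C = len Omega le x"
    using len_obtain[OF fin po xy(1)] by blast
  have CO: "C \<subseteq> Omega" and cx: "\<forall>c\<in>C. le c x" and ch: "is_chain le C" using C by (auto simp: chs_def)
  have yC: "y \<notin> C" using cx xy po unfolding is_poset_def by blast
  have "insert y C \<in> chs Omega le y"
    unfolding chs_def is_chain_def
    using CO cx ch xy po unfolding is_poset_def is_chain_def by blast
  then have "card (insert y C) \<le> len Omega le y" by (rule len_ge[OF fin])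
  moreover have "finite C" using CO fin finite_subset by blast
  then have "card (insert y C) = Suc (card C)" using yC by simp
  ultimately show ?thesis using C by simp
qed


definition H1 where "H1 Omega le = (\<forall>x\<in>Omega - maxs le Omega. \<forall>t\<in>maxs le Omega. le x t)"

lemma len_restrict:
  assumes fin: "finite Omega" and po: "is_poset Omega le" and y: "y \<in> Omega - maxs le Omega"
  shows "len (Omega - maxs le Omega) le y = len Omega le y"
proof -
  have "chs (Omega - maxs le Omega) le y = chs Omega le y"
  proof
    show "chs (Omega - maxs le Omega) le y \<subseteq> chs Omega le y" by (auto simp: chs_def)
    show "chs Omega le y \<subseteq> chs (Omega - maxs le Omega) le y"
    proof
      fix C assume C: "C \<in> chs Omega le y"
      have "c \<notin> maxs le Omega" if "c \<in> C" for c
        using C that y by (auto simp: chs_def maxs_def)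
      then show "C \<in> chs (Omega - maxs le Omega) le y" using C by (auto simp: chs_def)
    qed
  qed
  then show ?thesis by (simp add: len_alt)
qed

lemma len_T:
  assumes fin: "finite Omega" and po: "is_poset Omega le" and h: "H1 Omega le"
    and t: "t \<in> maxs le Omega" and t': "t' \<in> maxs le Omega"
  shows "len Omega le t \<le> len Omega le t'"
proof -
  have tO: "t \<in> Omega" and t'O: "t' \<in> Omega" using t t' by (auto simp: maxs_def)
  obtain C where C: "C \<in> chs Omega le t" "card C = len Omega le t"
    using len_obtain[OF fin po tO] by blast
  have CO: "C \<subseteq> Omega" and ct: "\<forall>c\<in>C. le c t" and ch: "is_chain le C" and tC: "t \<in> C"
    using C by (auto simp: chs_def)
  have sub: "C - {t} \<subseteq> Omega - maxs le Omega"
    using CO ct t by (auto simp: maxs_def)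
  have le': "\<forall>c\<in>C - {t}. le c t'" using sub h t' by (auto simp: H1_def)
  have refl: "le t' t'" using po t'O by (auto simp: is_poset_def)
  have "insert t' (C - {t}) \<in> chs Omega le t'"
    unfolding chs_def is_chain_def using CO t'O ch le' refl unfolding is_chain_def by blast
  then have "card (insert t' (C - {t})) \<le> len Omega le t'" by (rule len_ge[OF fin])
  moreover have finC: "finite C" using CO fin finite_subset by blast
  moreover have "t' \<notin> C - {t}" using sub t' by blast
  ultimately have "Suc (card (C - {t})) \<le> len Omega le t'" by simp
  moreover have "card C = Suc (card (C - {t}))" using finC tC
    by (metis card_Suc_Diff1)
  ultimately show ?thesis using C by simp
qed

lemma hier_iff:
  assumes fin: "finite Omega" and po: "is_poset Omega le"
  shows "hierarchical Omega le \<longleftrightarrow> H1 Omega le \<and> hierarchical (Omega - maxs le Omega) le"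
proof
  assume hi: "hierarchical Omega le"
  have "H1 Omega le" unfolding H1_def
  proof (intro ballI)
    fix x t assume x: "x \<in> Omega - maxs le Omega" and t: "t \<in> maxs le Omega"
    have tO: "t \<in> Omega" using t by (auto simp: maxs_def)
    obtain y where y: "y \<in> Omega" "le x y" "y \<noteq> x" using x by (auto simp: maxs_def)
    show "le x t"
    proof (cases "len Omega le x + 1 \<le> len Omega le t")
      case True then show ?thesis using hi x tO by (auto simp: hierarchical_def)
    next
      case False
      have "len Omega le x < len Omega le y" using len_mono[OF fin po _ y(1,2)] x y(3) by auto
      then have "len Omega le t + 1 \<le> len Omega le y" using False by linarith
      then have "le t y" using hi tO y by (auto simp: hierarchical_def)
      then have "y = t" using t y by (auto simp: maxs_def)
      then show ?thesis using y by simp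
    qed
  qed
  moreover have "hierarchical (Omega - maxs le Omega) le"
    using hi len_restrict[OF fin po] by (auto simp: hierarchical_def)
  ultimately show "H1 Omega le \<and> hierarchical (Omega - maxs le Omega) le" by blast
next
  assume "H1 Omega le \<and> hierarchical (Omega - maxs le Omega) le"
  then have h: "H1 Omega le" and hi': "hierarchical (Omega - maxs le Omega) le" by auto
  show "hierarchical Omega le" unfolding hierarchical_def
  proof (intro ballI impI)
    fix u v assume u: "u \<in> Omega" and v: "v \<in> Omega" and l: "len Omega le u + 1 \<le> len Omega le v"
    show "le u v"
    proof (cases "v \<in> maxs le Omega")
      case vT: True
      show ?thesis
      proof (cases "u \<in> maxs le Omega")
        case True
        with len_T[OF fin po h vT True] l show ?thesis by simp
      next
        case False then show ?thesis using h u vT by (auto simp: H1_def)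
      qed
    next
      case vT: False
      show ?thesis
      proof (cases "u \<in> maxs le Omega")
        case True
        have "le v u" using h v vT True by (auto simp: H1_def)
        moreover have "v \<noteq> u" using vT True by blast
        ultimately have "len Omega le v < len Omega le u" using len_mono[OF fin po v u] by blast
        then show ?thesis using l by linarith
      next
        case False
        then show ?thesis using hi' u v vT l len_restrict[OF fin po] by (auto simp: hierarchical_def)
      qed
    qed
  qed
qed


definition Cond where "Cond Omega le = (\<forall>B\<in>dual_ideals Omega le. \<forall>D\<in>dual_ideals Omega le.
       card B = card D \<longrightarrow> card (mins le B) = card (mins le D))"

lemma mins_T: "D \<subseteq> maxs le Omega \<Longrightarrow> mins le D = D"
  by (auto simp: mins_def maxs_def)

lemma T_ideal: "maxs le Omega \<in> dual_ideals Omega le"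
  by (auto simp: maxs_def dual_ideals_def)

lemma lift:
  assumes fin: "finite Omega" and po: "is_poset Omega le" and h: "H1 Omega le"
    and D: "D \<in> dual_ideals (Omega - maxs le Omega) le" and ne: "D \<noteq> {}"
  shows "D \<union> maxs le Omega \<in> dual_ideals Omega le"
    "mins le (D \<union> maxs le Omega) = mins le D"
    "card (D \<union> maxs le Omega) = card D + card (maxs le Omega)"
proof -
  have DO: "D \<subseteq> Omega - maxs le Omega" and up: "\<forall>i\<in>D. \<forall>j\<in>Omega - maxs le Omega. le i j \<longrightarrow> j \<in> D"
    using D by (auto simp: dual_ideals_def)
  show "D \<union> maxs le Omega \<in> dual_ideals Omega le"
    unfolding dual_ideals_def
  proof (intro CollectI conjI ballI impI)
    show "D \<union> maxs le Omega \<subseteq> Omega" using DO by (auto simp: maxs_def)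
    fix i j assume i: "i \<in> D \<union> maxs le Omega" and j: "j \<in> Omega" "le i j"
    show "j \<in> D \<union> maxs le Omega"
    proof (cases "i \<in> maxs le Omega")
      case True then have "j = i" using j by (auto simp: maxs_def)
      then show ?thesis using True by simp
    next
      case False then have "i \<in> D" using i by simp
      then show ?thesis using up j by blast
    qed
  qed
  obtain x where x: "x \<in> D" using ne by blast
  show "mins le (D \<union> maxs le Omega) = mins le D"
  proof
    show "mins le (D \<union> maxs le Omega) \<subseteq> mins le D"
    proof
      fix y assume y: "y \<in> mins le (D \<union> maxs le Omega)"
      have "y \<notin> maxs le Omega"
      proof
        assume yT: "y \<in> maxs le Omega"
        have "le x y" using h x DO yT by (auto simp: H1_def)
        then have "x = y" using y x by (auto simp: mins_def)
        then show False using x DO yT by blast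
      qed
      then show "y \<in> mins le D" using y by (auto simp: mins_def)
    qed
    show "mins le D \<subseteq> mins le (D \<union> maxs le Omega)"
    proof
      fix y assume y: "y \<in> mins le D"
      have "z = y" if z: "z \<in> D \<union> maxs le Omega" "le z y" for z
      proof (cases "z \<in> maxs le Omega")
        case True
        then have "y = z" using z y DO by (auto simp: maxs_def mins_def)
        then show ?thesis using y DO True by (auto simp: mins_def)
      next
        case False then show ?thesis using z y by (auto simp: mins_def)
      qed
      then show "y \<in> mins le (D \<union> maxs le Omega)" using y by (auto simp: mins_def)
    qed
  qed
  have "finite D" using DO fin finite_subset by blast
  moreover have "finite (maxs le Omega)" using fin by (auto simp: maxs_def)
  ultimately show "card (D \<union> maxs le Omega) = card D + card (maxs le Omega)"
    using DO by (subst card_Un_disjoint) auto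
qed

lemma split:
  assumes h: "H1 Omega le" and D: "D \<in> dual_ideals Omega le" and ne: "D \<inter> (Omega - maxs le Omega) \<noteq> {}"
  shows "D = (D \<inter> (Omega - maxs le Omega)) \<union> maxs le Omega"
    "D \<inter> (Omega - maxs le Omega) \<in> dual_ideals (Omega - maxs le Omega) le"
proof -
  have DO: "D \<subseteq> Omega" and up: "\<forall>i\<in>D. \<forall>j\<in>Omega. le i j \<longrightarrow> j \<in> D"
    using D by (auto simp: dual_ideals_def)
  obtain x where x: "x \<in> D" "x \<in> Omega - maxs le Omega" using ne by blast
  have "maxs le Omega \<subseteq> D"
  proof
    fix t assume t: "t \<in> maxs le Omega"
    then have "le x t" using h x by (auto simp: H1_def)
    then show "t \<in> D" using up x t by (auto simp: maxs_def)
  qed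
  then show "D = (D \<inter> (Omega - maxs le Omega)) \<union> maxs le Omega" using DO by blast
  show "D \<inter> (Omega - maxs le Omega) \<in> dual_ideals (Omega - maxs le Omega) le"
    using DO up by (auto simp: dual_ideals_def)
qed

lemma cond_iff:
  assumes fin: "finite Omega" and po: "is_poset Omega le"
  shows "Cond Omega le \<longleftrightarrow> H1 Omega le \<and> Cond (Omega - maxs le Omega) le"
proof
  assume c: "Cond Omega le"
  have finT: "finite (maxs le Omega)" using fin by (auto simp: maxs_def)
  have h: "H1 Omega le"
  proof (rule ccontr)
    assume "\<not> H1 Omega le"
    then obtain x0 where x0: "x0 \<in> Omega" "x0 \<in> Omega - maxs le Omega \<and> (\<exists>t\<in>maxs le Omega. \<not> le x0 t)"
      unfolding H1_def by blast
    from ex_maximal_P[OF fin po x0(1), of "\<lambda>x. x \<in> Omega - maxs le Omega \<and> (\<exists>t\<in>maxs le Omega. \<not> le x t)"] x0(2)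
    obtain x where xO: "x \<in> Omega" and xb: "x \<in> Omega - maxs le Omega" and
       tt: "\<exists>t\<in>maxs le Omega. \<not> le x t" and
       mx: "\<forall>z\<in>Omega. le x z \<and> (z \<in> Omega - maxs le Omega \<and> (\<exists>t\<in>maxs le Omega. \<not> le z t)) \<longrightarrow> z = x"
      by blast
    obtain t where t: "t \<in> maxs le Omega" "\<not> le x t" using tt by blast
    have upx: "z = x \<or> z \<in> maxs le Omega" if z: "z \<in> Omega" "le x z" for z
    proof (rule ccontr)
      assume "\<not> ?thesis"
      then have zx: "z \<noteq> x" and zT: "z \<notin> maxs le Omega" by auto
      then have "\<forall>t\<in>maxs le Omega. le z t" using mx z by blast
      then have "\<forall>t\<in>maxs le Omega. le x t" using po z xO unfolding is_poset_def maxs_def by blast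
      then show False using t by blast
    qed
    obtain y where y: "y \<in> Omega" "le x y" "y \<noteq> x" using xb by (auto simp: maxs_def)
    define D1 where "D1 = insert x (maxs le Omega - {t})"
    have D1i: "D1 \<in> dual_ideals Omega le"
      unfolding dual_ideals_def D1_def
    proof (intro CollectI conjI ballI impI)
      show "insert x (maxs le Omega - {t}) \<subseteq> Omega" using xO by (auto simp: maxs_def)
      fix i j assume i: "i \<in> insert x (maxs le Omega - {t})" and j: "j \<in> Omega" "le i j"
      show "j \<in> insert x (maxs le Omega - {t})"
      proof (cases "i = x")
        case True
        then show ?thesis using upx[OF j(1)] j t by auto
      next
        case False
        then show ?thesis using i j by (auto simp: maxs_def)
      qed
    qed
    have "card D1 = card (maxs le Omega)"
      unfolding D1_def using xb t finT by (simp add: card_Diff_singleton)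
      (metis Suc_pred card_gt_0_iff empty_iff)
    moreover have "card (mins le D1) < card D1"
    proof (rule psubset_card_mono)
      show "finite D1" using finT by (simp add: D1_def)
      have "y \<in> D1" using upx[OF y(1,2)] y(3) t y by (auto simp: D1_def)
      moreover have "y \<notin> mins le D1" using y by (auto simp: mins_def D1_def)
      ultimately show "mins le D1 \<subset> D1" by (auto simp: mins_def)
    qed
    moreover have "card (mins le (maxs le Omega)) = card (mins le D1)"
      using c T_ideal D1i calculation(1) unfolding Cond_def by metis
    ultimately show False using mins_T[of "maxs le Omega" le Omega] by simp
  qed
  have "Cond (Omega - maxs le Omega) le" unfolding Cond_def
  proof (intro ballI impI)
    fix B D assume B: "B \<in> dual_ideals (Omega - maxs le Omega) le" and D: "D \<in> dual_ideals (Omega - maxs le Omega) le"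
      and e: "card B = card D"
    have finB: "finite B" using B fin by (auto simp: dual_ideals_def intro: finite_subset)
    have finD: "finite D" using D fin by (auto simp: dual_ideals_def intro: finite_subset)
    show "card (mins le B) = card (mins le D)"
    proof (cases "B = {}")
      case True
      then have "D = {}" using e finD by simp
      then show ?thesis using True by simp
    next
      case False
      then have "D \<noteq> {}" using e finB by auto
      then show ?thesis using lift[OF fin po h B False] lift[OF fin po h D] c e
        unfolding Cond_def by metis
    qed
  qed
  with h show "H1 Omega le \<and> Cond (Omega - maxs le Omega) le" by blast
next
  assume "H1 Omega le \<and> Cond (Omega - maxs le Omega) le"
  then have h: "H1 Omega le" and c': "Cond (Omega - maxs le Omega) le" by auto
  have finT: "finite (maxs le Omega)" using fin by (auto simp: maxs_def)
  have key: "card (mins le B) = card (mins le D)"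
    if B: "B \<in> dual_ideals Omega le" and D: "D \<in> dual_ideals Omega le" and e: "card B = card D"
      and nB: "B \<inter> (Omega - maxs le Omega) \<noteq> {}" for B D
  proof -
    let ?B' = "B \<inter> (Omega - maxs le Omega)"
    have sB: "B = ?B' \<union> maxs le Omega" "?B' \<in> dual_ideals (Omega - maxs le Omega) le"
      using split[OF h B nB] by auto
    have lB: "mins le (?B' \<union> maxs le Omega) = mins le ?B'"
       "card (?B' \<union> maxs le Omega) = card ?B' + card (maxs le Omega)"
      using lift[OF fin po h sB(2) nB] by auto
    show ?thesis
    proof (cases "D \<inter> (Omega - maxs le Omega) = {}")
      case True
      have "D \<subseteq> maxs le Omega" using True D by (auto simp: dual_ideals_def)
      then have "card D \<le> card (maxs le Omega)" using finT card_mono by blast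
      moreover have "card ?B' > 0" using nB fin by (auto simp: card_gt_0_iff)
      ultimately show ?thesis using e lB(2) sB(1) by simp
    next
      case nD: False
      let ?D' = "D \<inter> (Omega - maxs le Omega)"
      have sD: "D = ?D' \<union> maxs le Omega" "?D' \<in> dual_ideals (Omega - maxs le Omega) le"
        using split[OF h D nD] by auto
      have lD: "mins le (?D' \<union> maxs le Omega) = mins le ?D'"
         "card (?D' \<union> maxs le Omega) = card ?D' + card (maxs le Omega)"
        using lift[OF fin po h sD(2) nD] by auto
      have "card ?B' = card ?D'" using e lB(2) lD(2) sB(1) sD(1) by simp
      then have "card (mins le ?B') = card (mins le ?D')" using c' sB(2) sD(2) unfolding Cond_def by blast
      then show ?thesis using lB(1) lD(1) sB(1) sD(1) by simp
    qed
  qed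
  show "Cond Omega le" unfolding Cond_def
  proof (intro ballI impI)
    fix B D assume B: "B \<in> dual_ideals Omega le" and D: "D \<in> dual_ideals Omega le" and e: "card B = card D"
    show "card (mins le B) = card (mins le D)"
    proof (cases "B \<inter> (Omega - maxs le Omega) = {}")
      case nB: True
      show ?thesis
      proof (cases "D \<inter> (Omega - maxs le Omega) = {}")
        case True
        have "B \<subseteq> maxs le Omega" "D \<subseteq> maxs le Omega" using True nB B D by (auto simp: dual_ideals_def)
        then show ?thesis using e mins_T by metis
      next
        case False then show ?thesis using key[OF D B e[symmetric]] by simp
      qed
    next
      case False then show ?thesis using key[OF B D e] by simp
    qed
  qed
qed


lemma main: "finite Omega \<Longrightarrow> is_poset Omega le \<Longrightarrow> hierarchical Omega le \<longleftrightarrow> Cond Omega le"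
proof (induction "card Omega" arbitrary: Omega rule: less_induct)
  case less
  show ?case
  proof (cases "Omega = {}")
    case True
    have "dual_ideals Omega le = {{}}" using True by (auto simp: dual_ideals_def)
    then show ?thesis using True by (simp add: hierarchical_def Cond_def)
  next
    case False
    then obtain x where x: "x \<in> Omega" by blast
    obtain y where y: "y \<in> Omega" "\<forall>z\<in>Omega. le y z \<and> True \<longrightarrow> z = y"
      using ex_maximal_P[OF less.prems x, of "\<lambda>_. True"] by blast
    have "y \<in> maxs le Omega" using y by (auto simp: maxs_def)
    then have "card (Omega - maxs le Omega) < card Omega"
      using less.prems(1) by (intro psubset_card_mono) (auto simp: maxs_def)
    moreover have "finite (Omega - maxs le Omega)" using less.prems(1) by simp
    moreover have "is_poset (Omega - maxs le Omega) le" using poset_sub[OF less.prems(2)] by blast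
    ultimately have "hierarchical (Omega - maxs le Omega) le \<longleftrightarrow> Cond (Omega - maxs le Omega) le"
      using less.hyps by blast
    then show ?thesis using hier_iff[OF less.prems] cond_iff[OF less.prems] by blast
  qed
qed

theorem proposition3p2:
  fixes Omega :: "'a set" and le :: "'a \<Rightarrow> 'a \<Rightarrow> bool"
    and tau eta :: "'a \<Rightarrow> 'k::field"
  assumes "finite Omega" and "is_poset Omega le"
    and "\<forall>i\<in>Omega. tau i \<noteq> 0" and "\<forall>i\<in>Omega. eta i \<noteq> 0"
  shows "hierarchical Omega le \<longleftrightarrow>
    (\<forall>B\<in>dual_ideals Omega le. \<forall>D\<in>dual_ideals Omega le.
       card B = card D \<longrightarrow>
       degree (pi_poly le tau eta Omega B) = degree (pi_poly le tau eta Omega D))"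
proof -
  have deg: "degree (pi_poly le tau eta Omega B) = card Omega - card B + card (mins le B)"
    if B: "B \<in> dual_ideals Omega le" for B
  proof -
    have "B \<subseteq> Omega" using B by (auto simp: dual_ideals_def)
    then have "card (Omega - B) = card Omega - card B" using assms(1) by (simp add: card_Diff_subset finite_subset)
    then show ?thesis using degree_pi[OF assms B] by simp
  qed
  have "(\<forall>B\<in>dual_ideals Omega le. \<forall>D\<in>dual_ideals Omega le.
       card B = card D \<longrightarrow>
       degree (pi_poly le tau eta Omega B) = degree (pi_poly le tau eta Omega D)) \<longleftrightarrow> Cond Omega le"
    unfolding Cond_def using deg by auto
  then show ?thesis using main[OF assms(1,2)] by simp
qed

end
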